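(* Let $(X,\Psi)$ be a $\sigma$-totally bounded uniform space and $Y\subseteq X$. The following are equivalent: (1) $(X,\Psi)$ satisfies $\textsf{S}_1(\mathcal{O}_\Psi,\mathcal{O}_Y)$; (2) ONE has no winning strategy in the game ${\sf G}_1(\mathcal{O}_\Psi,\mathcal{O}_Y)$.
   Context: A uniformity on $X$ is a filter $\Psi$ on $X\times X$ whose members contain the diagonal $\Delta_X$, closed under $U\mapsto U^{-1}=\{(y,x):(x,y)\in U\}$, such that for each $U\in\Psi$ there is $V\in\Psi$ with $V\circ V\subseteq U$, and with $\bigcap\Psi=\Delta_X$. For $U\in\Psi$, $U(x)=\{y:(x,y)\in U\}$, and $X$ carries the topology in which $\{U(x):U\in\Psi\}$ is a neighbourhood base at $x$. A subset $K$ is totally bounded if for each $U\in\Psi$ there is a finite $F\subseteq X$ with $K\subseteq\bigcup_{x\in F}U(x)$; $X$ is $\sigma$-totally bounded if it is a countable union of totally bounded subsets. For $N\in\Psi$, $\mathcal{O}(N)=\{\mathrm{Int}(N(x)):x\in X\}$, and $\mathcal{O}_\Psi=\{\mathcal{O}(N):N\in\Psi\}$. $\mathcal{O}_Y$ is the set of families of open subsets of $X$ whose union contains $Y$. $\textsf{S}_1(\mathcal{A},\mathcal{B})$: for every sequence $(O_n)$ of elements of $\mathcal{A}$ there are $T_n\in O_n$ with $\{T_n:n\in\mathbb{N}\}\in\mathcal{B}$. Game ${\sf G}_1(\mathcal{A},\mathcal{B})$: in inning $n$ ONE chooses $O_n\in\mathcal{A}$, TWO responds with $T_n\in O_n$;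 TWO wins if $\{T_n:n\in\mathbb{N}\}\in\mathcal{B}$, else ONE wins. *)

theory Defs
  imports Main
begin

definition uniformity :: "'a set \<Rightarrow> ('a \<times> 'a) set set \<Rightarrow> bool" where
  "uniformity X Psi \<longleftrightarrow>
     Psi \<noteq> {} \<and>
     (\<forall>U\<in>Psi. U \<subseteq> X \<times> X) \<and>
     (\<forall>U\<in>Psi. \<forall>V. U \<subseteq> V \<and> V \<subseteq> X \<times> X \<longrightarrow> V \<in> Psi) \<and>
     (\<forall>U\<in>Psi. \<forall>V\<in>Psi. U \<inter> V \<in> Psi) \<and>
     (\<forall>U\<in>Psi. Id_on X \<subseteq> U) \<and>
     (\<forall>U\<in>Psi. U\<inverse> \<in> Psi) \<and>
     (\<forall>U\<in>Psi. \<exists>V\<in>Psi. V O V \<subseteq> U) \<and>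
     \<Inter>Psi = Id_on X"

text \<open>Open sets of the uniform topology: U(x) = U `` {x} is a neighbourhood base at x.\<close>
definition uopen :: "'a set \<Rightarrow> ('a \<times> 'a) set set \<Rightarrow> 'a set \<Rightarrow> bool" where
  "uopen X Psi G \<longleftrightarrow> G \<subseteq> X \<and> (\<forall>x\<in>G. \<exists>U\<in>Psi. U `` {x} \<subseteq> G)"

definition uinterior :: "'a set \<Rightarrow> ('a \<times> 'a) set set \<Rightarrow> 'a set \<Rightarrow> 'a set" where
  "uinterior X Psi A = \<Union>{G. uopen X Psi G \<and> G \<subseteq> A}"

definition totally_bounded_u :: "'a set \<Rightarrow> ('a \<times> 'a) set set \<Rightarrow> 'a set \<Rightarrow> bool" where
  "totally_bounded_u X Psi K \<longleftrightarrow> K \<subseteq> X \<and>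
     (\<forall>U\<in>Psi. \<exists>F. finite F \<and> F \<subseteq> X \<and> K \<subseteq> (\<Union>x\<in>F. U `` {x}))"

definition sigma_totally_bounded :: "'a set \<Rightarrow> ('a \<times> 'a) set set \<Rightarrow> bool" where
  "sigma_totally_bounded X Psi \<longleftrightarrow>
     (\<exists>K :: nat \<Rightarrow> 'a set. X = (\<Union>n. K n) \<and> (\<forall>n. totally_bounded_u X Psi (K n)))"

definition OcovN :: "'a set \<Rightarrow> ('a \<times> 'a) set set \<Rightarrow> ('a \<times> 'a) set \<Rightarrow> 'a set set" where
  "OcovN X Psi N = {uinterior X Psi (N `` {x}) | x. x \<in> X}"

definition O_Psi :: "'a set \<Rightarrow> ('a \<times> 'a) set set \<Rightarrow> 'a set set set" where
  "O_Psi X Psi = {OcovN X Psi N | N. N \<in> Psi}"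

definition O_cov :: "'a set \<Rightarrow> ('a \<times> 'a) set set \<Rightarrow> 'a set \<Rightarrow> 'a set set set" where
  "O_cov X Psi Y = {\<U>. (\<forall>G\<in>\<U>. uopen X Psi G) \<and> Y \<subseteq> \<Union>\<U>}"

definition S1 :: "'b set set set \<Rightarrow> 'b set set set \<Rightarrow> bool" where
  "S1 A B \<longleftrightarrow> (\<forall>Os :: nat \<Rightarrow> 'b set set. (\<forall>n. Os n \<in> A) \<longrightarrow>
      (\<exists>T :: nat \<Rightarrow> 'b set. (\<forall>n. T n \<in> Os n) \<and> range T \<in> B))"

text \<open>A strategy for ONE in G_1(A,B): given the list of TWO's previous moves,
  ONE chooses an element of A.\<close>
definition one_strategy :: "'b set set set \<Rightarrow> ('b set list \<Rightarrow> 'b set set) \<Rightarrow> bool" where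
  "one_strategy A \<sigma> \<longleftrightarrow> (\<forall>h. \<sigma> h \<in> A)"

definition follows :: "('b set list \<Rightarrow> 'b set set) \<Rightarrow> (nat \<Rightarrow> 'b set) \<Rightarrow> bool" where
  "follows \<sigma> T \<longleftrightarrow> (\<forall>n. T n \<in> \<sigma> (map T [0..<n]))"

definition one_winning_G1 :: "'b set set set \<Rightarrow> 'b set set set \<Rightarrow> ('b set list \<Rightarrow> 'b set set) \<Rightarrow> bool" where
  "one_winning_G1 A B \<sigma> \<longleftrightarrow> one_strategy A \<sigma> \<and> (\<forall>T. follows \<sigma> T \<longrightarrow> range T \<notin> B)"

end

theory Submission
  imports Defs "HOL-Library.Nat_Bijection"
begin

primrec hist :: "('b list \<Rightarrow> nat \<Rightarrow> 'b) \<Rightarrow> nat \<Rightarrow> 'b list" where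
  "hist ch 0 = []"
| "hist ch (Suc n) = hist ch n @ [ch (hist ch n) n]"

lemma hist_map: "hist ch n = map (\<lambda>i. ch (hist ch i) i) [0..<n]"
  by (induction n) auto

primrec Hs :: "('b list \<Rightarrow> nat \<Rightarrow> 'c set) \<Rightarrow> ('b list \<Rightarrow> nat \<Rightarrow> 'c \<Rightarrow> 'b) \<Rightarrow> nat \<Rightarrow> 'b list set" where
  "Hs F c 0 = {[]}"
| "Hs F c (Suc n) = (\<lambda>(h,z). h @ [c h n z]) ` (SIGMA h:Hs F c n. F h n)"

lemma Hs_finite: assumes "\<And>h n. finite (F h n)" shows "finite (Hs F c n)"
  by (induction n) (auto intro!: finite_SigmaI assms)

lemma hist_Hs:
  assumes "\<And>h n. z h n \<in> F h n"
  shows "hist (\<lambda>h n. c h n (z h n)) n \<in> Hs F c n"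
proof (induction n)
  case 0 then show ?case by simp
next
  case (Suc n)
  then show ?case using assms by (auto intro!: image_eqI[where x="(hist (\<lambda>h n. c h n (z h n)) n, z (hist (\<lambda>h n. c h n (z h n)) n) n)"])
qed

lemma Hs_ne: assumes "\<And>h n. F h n \<noteq> {}" shows "Hs F c n \<noteq> {}"
proof -
  have "hist (\<lambda>h n. c h n ((\<lambda>h n. SOME z. z \<in> F h n) h n)) n \<in> Hs F c n"
    by (rule hist_Hs) (simp add: assms some_in_eq)
  then show ?thesis by blast
qed

lemma uinterior_mono: "A \<subseteq> B \<Longrightarrow> uinterior X Psi A \<subseteq> uinterior X Psi B"
  unfolding uinterior_def by auto

lemma uinterior_sub: "uinterior X Psi A \<subseteq> A"
  unfolding uinterior_def by auto

lemma uinterior_open: "uopen X Psi (uinterior X Psi A)"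
proof -
  have "uinterior X Psi A \<subseteq> X" unfolding uinterior_def uopen_def by blast
  moreover have "\<exists>U\<in>Psi. U `` {x} \<subseteq> uinterior X Psi A" if xin: "x \<in> uinterior X Psi A" for x
  proof -
    obtain G where G: "uopen X Psi G" "G \<subseteq> A" "x \<in> G" using xin unfolding uinterior_def by blast
    then obtain U where "U \<in> Psi" "U `` {x} \<subseteq> G" unfolding uopen_def by blast
    moreover have "G \<subseteq> uinterior X Psi A" using G unfolding uinterior_def by blast
    ultimately show ?thesis by blast
  qed
  ultimately show ?thesis unfolding uopen_def by blast
qed

lemma unif_D: assumes "uniformity X Psi" shows
     "Psi \<noteq> {}" "(\<forall>U\<in>Psi. U \<subseteq> X \<times> X)"
     "(\<forall>U\<in>Psi. \<forall>V\<in>Psi. U \<inter> V \<in> Psi)"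
     "(\<forall>U\<in>Psi. Id_on X \<subseteq> U)"
     "(\<forall>U\<in>Psi. U\<inverse> \<in> Psi)"
     "(\<forall>U\<in>Psi. \<exists>V\<in>Psi. V O V \<subseteq> U)"
  using assms unfolding uniformity_def apply -
  apply (elim conjE, assumption)+
  done

lemma unif_Int2: "uniformity X Psi \<Longrightarrow> U \<in> Psi \<Longrightarrow> V \<in> Psi \<Longrightarrow> U \<inter> V \<in> Psi"
  using unif_D(3) by blast
lemma unif_inv: "uniformity X Psi \<Longrightarrow> U \<in> Psi \<Longrightarrow> U\<inverse> \<in> Psi"
  using unif_D(5) by blast
lemma unif_half: "uniformity X Psi \<Longrightarrow> U \<in> Psi \<Longrightarrow> \<exists>V\<in>Psi. V O V \<subseteq> U"
  using unif_D(6) by blast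
lemma unif_sub: "uniformity X Psi \<Longrightarrow> U \<in> Psi \<Longrightarrow> U \<subseteq> X \<times> X"
  using unif_D(2) by blast
lemma unif_diag: "uniformity X Psi \<Longrightarrow> U \<in> Psi \<Longrightarrow> Id_on X \<subseteq> U"
  using unif_D(4) by blast
lemma unif_ne: "uniformity X Psi \<Longrightarrow> Psi \<noteq> {}"
  using unif_D(1) by blast

lemma unif_Int_finite:
  assumes u: "uniformity X Psi" and "finite S" "S \<noteq> {}" "S \<subseteq> Psi"
  shows "\<Inter>S \<in> Psi"
  using assms(2-4)
proof (induction S rule: finite_ne_induct)
  case (singleton x) then show ?case by simp
next
  case (insert x F)
  then show ?case using unif_Int2[OF u, of x "\<Inter>F"] by simp
qed

lemma unif_three:
  assumes u: "uniformity X Psi" and N: "N \<in> Psi"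
  shows "\<exists>V\<in>Psi. V O V O V \<subseteq> N"
proof -
  obtain V1 where V1: "V1 \<in> Psi" "V1 O V1 \<subseteq> N" using unif_half[OF u N] by blast
  obtain V2 where V2: "V2 \<in> Psi" "V2 O V2 \<subseteq> V1" using unif_half[OF u V1(1)] by blast
  have sub: "V2 \<subseteq> X \<times> X" "Id_on X \<subseteq> V2" using unif_sub[OF u V2(1)] unif_diag[OF u V2(1)] by auto
  have "V2 \<subseteq> V2 O V2"
  proof
    fix p assume p: "p \<in> V2"
    obtain a b where ab: "p = (a,b)" by fastforce
    have "b \<in> X" using sub p ab by auto
    then have "(b,b) \<in> V2" using sub by auto
    then show "p \<in> V2 O V2" using p ab by auto
  qed
  then have "V2 \<subseteq> V1" using V2 by auto
  then have "V2 O V2 O V2 \<subseteq> V1 O V1" using V2 by blast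
  then show ?thesis using V1 V2 by blast
qed

theorem theorem2p3:
  fixes X Y :: "'a set" and Psi :: "('a \<times> 'a) set set"
  assumes "uniformity X Psi"
    and "sigma_totally_bounded X Psi"
    and "Y \<subseteq> X"
  shows "S1 (O_Psi X Psi) (O_cov X Psi Y) \<longleftrightarrow>
         \<not> (\<exists>\<sigma>. one_winning_G1 (O_Psi X Psi) (O_cov X Psi Y) \<sigma>)"
proof
  assume S: "S1 (O_Psi X Psi) (O_cov X Psi Y)"
  show "\<not> (\<exists>\<sigma>. one_winning_G1 (O_Psi X Psi) (O_cov X Psi Y) \<sigma>)"
  proof
    assume "\<exists>\<sigma>. one_winning_G1 (O_Psi X Psi) (O_cov X Psi Y) \<sigma>"
    then obtain \<sigma> where sw: "one_winning_G1 (O_Psi X Psi) (O_cov X Psi Y) \<sigma>" by blast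
    have u: "uniformity X Psi" by fact
    have "\<forall>h. \<exists>N. N \<in> Psi \<and> \<sigma> h = OcovN X Psi N"
      using sw unfolding one_winning_G1_def one_strategy_def O_Psi_def by blast
    then obtain Nf where Nf: "\<And>h. Nf h \<in> Psi" "\<And>h. \<sigma> h = OcovN X Psi (Nf h)" by metis
    have "\<forall>h. \<exists>V. V \<in> Psi \<and> V O V O V \<subseteq> Nf h" using unif_three[OF u Nf(1)] by blast
    then obtain V where V: "\<And>h. V h \<in> Psi" "\<And>h. V h O V h O V h \<subseteq> Nf h" by metis
    obtain K :: "nat \<Rightarrow> 'a set" where K: "X = (\<Union>n. K n)" "\<And>n. totally_bounded_u X Psi (K n)"
      using assms(2) unfolding sigma_totally_bounded_def by blast
    obtain N0 where N0: "N0 \<in> Psi" using unif_ne[OF u] by blast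
    have "OcovN X Psi N0 \<in> O_Psi X Psi" using N0 unfolding O_Psi_def by blast
    then obtain T0 :: "nat \<Rightarrow> 'a set" where "\<forall>n. T0 n \<in> OcovN X Psi N0"
      using S[unfolded S1_def, rule_format, of "\<lambda>n. OcovN X Psi N0"] by auto
    then have "T0 0 \<in> OcovN X Psi N0" by blast
    then obtain x0 where x0: "x0 \<in> X" unfolding OcovN_def by blast
    have "\<exists>F. finite F \<and> F \<subseteq> X \<and> K (fst (prod_decode n)) \<subseteq> (\<Union>x\<in>F. V h `` {x})" for h n
    proof -
      have "totally_bounded_u X Psi (K (fst (prod_decode n)))" by (rule K(2))
      then have "\<forall>U\<in>Psi. \<exists>F. finite F \<and> F \<subseteq> X \<and> K (fst (prod_decode n)) \<subseteq> (\<Union>x\<in>F. U `` {x})"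
        unfolding totally_bounded_u_def by (elim conjE)
      then show ?thesis using V(1)[of h] by (elim ballE) auto
    qed
    then have "\<forall>h n. \<exists>F. finite F \<and> F \<subseteq> X \<and> K (fst (prod_decode n)) \<subseteq> (\<Union>x\<in>F. V h `` {x})" by blast
    then obtain Fc where Fc: "\<And>h n. finite (Fc h n)" "\<And>h n. Fc h n \<subseteq> X"
      "\<And>h n. K (fst (prod_decode n)) \<subseteq> (\<Union>x\<in>Fc h n. V h `` {x})" by metis
    define F where "F h n = insert x0 (Fc h n)" for h n
    define c where "c h n z = uinterior X Psi (Nf h `` {z})" for h :: "'a set list" and n :: nat and z
    define H where "H = Hs F c"
    have Hfin: "finite (H n)" for n unfolding H_def by (rule Hs_finite) (simp add: F_def Fc)
    have Hne: "H n \<noteq> {}" for n unfolding H_def by (rule Hs_ne) (simp add: F_def)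
    define M where "M n = \<Inter>((\<lambda>h. V h \<inter> (V h)\<inverse>) ` H n)" for n
    have VI: "V h \<inter> (V h)\<inverse> \<in> Psi" for h using unif_Int2[OF u V(1) unif_inv[OF u V(1)]] .
    have MPsi: "M n \<in> Psi" for n unfolding M_def
      by (rule unif_Int_finite[OF u]) (use Hfin Hne VI in auto)
    have "\<forall>m. \<exists>T. (\<forall>k. T k \<in> OcovN X Psi (M (prod_encode (m,k)))) \<and> range T \<in> O_cov X Psi Y"
    proof
      fix m
      show "\<exists>T. (\<forall>k. T k \<in> OcovN X Psi (M (prod_encode (m,k)))) \<and> range T \<in> O_cov X Psi Y"
        using S[unfolded S1_def, rule_format, of "\<lambda>k. OcovN X Psi (M (prod_encode (m,k)))"] MPsi
        unfolding O_Psi_def by blast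
    qed
    then obtain TT where TT: "\<And>m k. TT m k \<in> OcovN X Psi (M (prod_encode (m,k)))"
      "\<And>m. range (TT m) \<in> O_cov X Psi Y" by metis
    define T' where "T' n = TT (fst (prod_decode n)) (snd (prod_decode n))" for n
    have "\<forall>n. \<exists>x. x \<in> X \<and> T' n = uinterior X Psi (M n `` {x})"
    proof
      fix n
      have "T' n \<in> OcovN X Psi (M n)" using TT(1)[of "fst (prod_decode n)" "snd (prod_decode n)"]
        unfolding T'_def by (simp add: prod_decode_inverse)
      then show "\<exists>x. x \<in> X \<and> T' n = uinterior X Psi (M n `` {x})" unfolding OcovN_def by blast
    qed
    then obtain xs where xs: "\<And>n. xs n \<in> X" "\<And>n. T' n = uinterior X Psi (M n `` {xs n})" by metis
    define P where "P h n z = (z \<in> F h n \<and> (\<exists>y\<in>T' n \<inter> K (fst (prod_decode n)). (z,y) \<in> V h))" for h n z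
    define zs where "zs h n = (if \<exists>z. P h n z then SOME z. P h n z else x0)" for h n
    have zsF: "zs h n \<in> F h n" for h n
    proof (cases "\<exists>z. P h n z")
      case True
      have "P h n (SOME z. P h n z)" by (rule someI_ex[OF True])
      then have "P h n (zs h n)" unfolding zs_def using True by simp
      then show ?thesis unfolding P_def by blast
    next
      case False then show ?thesis unfolding zs_def F_def by auto
    qed
    define ch where "ch h n = c h n (zs h n)" for h n
    define play where "play n = ch (hist ch n) n" for n
    have hm: "hist ch n = map play [0..<n]" for n unfolding play_def by (rule hist_map)
    have hH: "hist ch n \<in> H n" for n unfolding H_def ch_def by (rule hist_Hs) (rule zsF)
    have FX: "F h n \<subseteq> X" for h n using Fc(2) x0 unfolding F_def by auto
    have fol: "follows \<sigma> play"
      unfolding follows_def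
    proof
      fix n
      have "play n = uinterior X Psi (Nf (hist ch n) `` {zs (hist ch n) n})"
        unfolding play_def ch_def c_def by simp
      moreover have "zs (hist ch n) n \<in> X" using zsF FX by blast
      ultimately have "play n \<in> \<sigma> (hist ch n)" unfolding Nf(2) OcovN_def by blast
      then show "play n \<in> \<sigma> (map play [0..<n])" by (simp add: hm)
    qed
    have cov: "range play \<in> O_cov X Psi Y"
      unfolding O_cov_def
    proof (intro CollectI conjI ballI subsetI)
      fix G assume "G \<in> range play"
      then show "uopen X Psi G" unfolding play_def ch_def c_def using uinterior_open by auto
    next
      fix y assume yY: "y \<in> Y"
      then have "y \<in> X" using assms(3) by auto
      then obtain m where ym: "y \<in> K m" using K(1) by auto
      obtain k where yk: "y \<in> TT m k" using TT(2)[of m] yY unfolding O_cov_def by blast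
      define n where "n = prod_encode (m,k)"
      have dec: "prod_decode n = (m,k)" unfolding n_def by (simp add: prod_encode_inverse)
      have yT: "y \<in> T' n" using yk unfolding T'_def dec by simp
      define h where "h = hist ch n"
      have hH': "h \<in> H n" unfolding h_def by (rule hH)
      have ymn: "y \<in> K (fst (prod_decode n))" using ym dec by simp
      have "y \<in> (\<Union>x\<in>Fc h n. V h `` {x})" using Fc(3)[of n h] ymn by blast
      then obtain z where z: "z \<in> Fc h n" "y \<in> V h `` {z}" by blast
      have zF: "z \<in> F h n" unfolding F_def using z(1) by simp
      have zy: "(z, y) \<in> V h" using z(2) by simp
      have "y \<in> T' n \<inter> K (fst (prod_decode n))" using yT ymn by simp
      then have "P h n z" unfolding P_def using zF zy by blast
      then have ex: "\<exists>z. P h n z" by blast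
      have "P h n (SOME z. P h n z)" by (rule someI_ex[OF ex])
      then have Pz: "P h n (zs h n)" unfolding zs_def using ex by simp
      then obtain y' where y': "y' \<in> T' n" "(zs h n, y') \<in> V h" unfolding P_def by blast
      have MV: "M n \<subseteq> V h \<inter> (V h)\<inverse>" unfolding M_def by (intro Inter_lower imageI hH')
      have "y' \<in> M n `` {xs n}" using y'(1) uinterior_sub[of X Psi "M n `` {xs n}"] xs(2)[of n] by auto
      then have "(xs n, y') \<in> M n" by simp
      then have y'x: "(y', xs n) \<in> V h" using MV by blast
      have "M n `` {xs n} \<subseteq> Nf h `` {zs h n}"
      proof
        fix w assume "w \<in> M n `` {xs n}"
        then have "(xs n, w) \<in> V h" using MV by blast
        then have "(zs h n, w) \<in> V h O V h O V h" using y'x y'(2) by blast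
        then show "w \<in> Nf h `` {zs h n}" using V(2) by blast
      qed
      then have "uinterior X Psi (M n `` {xs n}) \<subseteq> uinterior X Psi (Nf h `` {zs h n})"
        by (rule uinterior_mono)
      moreover have "play n = uinterior X Psi (Nf h `` {zs h n})"
        unfolding play_def ch_def c_def h_def by simp
      ultimately have "T' n \<subseteq> play n" using xs(2)[of n] by simp
      then show "y \<in> \<Union>(range play)" using yT by blast
    qed
    show False using sw fol cov unfolding one_winning_G1_def by blast
  qed
next
  assume nw: "\<not> (\<exists>\<sigma>. one_winning_G1 (O_Psi X Psi) (O_cov X Psi Y) \<sigma>)"
  show "S1 (O_Psi X Psi) (O_cov X Psi Y)"
  proof (rule ccontr)
    assume "\<not> S1 (O_Psi X Psi) (O_cov X Psi Y)"
    then obtain Os :: "nat \<Rightarrow> 'a set set" where Os: "\<And>n. Os n \<in> O_Psi X Psi"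
      "\<And>T. (\<forall>n. T n \<in> Os n) \<Longrightarrow> range T \<notin> O_cov X Psi Y"
      unfolding S1_def by blast
    have "one_winning_G1 (O_Psi X Psi) (O_cov X Psi Y) (\<lambda>h. Os (length h))"
      unfolding one_winning_G1_def one_strategy_def follows_def using Os by auto
    then show False using nw by blast
  qed
qed

end
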